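(* Let $t\ge 2$. Let $G$ be a 2-ichromatic ordered graph with vertices $v_1<\dots<v_{m+n}$ such that $\{v_1,\ldots,v_m\}$ and $\{v_{m+1},\ldots,v_{m+n}\}$ are the parts of an interval 2-coloring of $G$. If $v_1v_{m+1}$, $v_mv_{m+n}$ and $v_mv_{m+1}$ are edges of $G$, then $R_t(G)\ge (2t+1)r+1$, where $r=\min(m,n)-1$.
   Context: An ordered graph is a graph together with a specified linear ordering of its vertex set. An ordered graph $G$ is contained in an ordered graph $H$ if there is an order-preserving injection $V(G)\to V(H)$ mapping edges to edges. An interval coloring of an ordered graph is a partition of its vertex set into independent sets each consisting of consecutive vertices (called parts); an ordered graph is 2-ichromatic if its minimum number of parts in an interval coloring is 2. $R_t(G)$ is the minimum $N$ such that every coloring of the edges of the ordered complete graph on $N$ vertices with $t$ colors contains a monochromatic copy of $G$. *)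

theory Defs
  imports Main
begin

definition ordered_graph :: "nat \<Rightarrow> nat set set \<Rightarrow> bool" where
  "ordered_graph k E \<longleftrightarrow> (\<forall>e\<in>E. \<exists>i j. i < j \<and> j < k \<and> e = {i, j})"

definition interval_coloring :: "nat \<Rightarrow> nat set set \<Rightarrow> nat set set \<Rightarrow> bool" where
  "interval_coloring k E P \<longleftrightarrow>
     \<Union>P = {0..<k} \<and>
     (\<forall>p\<in>P. p \<noteq> {}) \<and>
     (\<forall>p\<in>P. \<forall>q\<in>P. p \<noteq> q \<longrightarrow> p \<inter> q = {}) \<and>
     (\<forall>p\<in>P. \<exists>a b. p = {a..<b}) \<and>
     (\<forall>p\<in>P. \<forall>e\<in>E. \<not> e \<subseteq> p)"

definition interval_chromatic_number :: "nat \<Rightarrow> nat set set \<Rightarrow> nat" where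
  "interval_chromatic_number k E = (LEAST c. \<exists>P. interval_coloring k E P \<and> card P = c)"

definition two_ichromatic :: "nat \<Rightarrow> nat set set \<Rightarrow> bool" where
  "two_ichromatic k E \<longleftrightarrow> interval_chromatic_number k E = 2"

definition ordered_arrows :: "nat \<Rightarrow> nat \<Rightarrow> nat \<Rightarrow> nat set set \<Rightarrow> bool" where
  "ordered_arrows N t k E \<longleftrightarrow>
     (\<forall>\<chi> :: nat set \<Rightarrow> nat. (\<forall>i j. i < j \<and> j < N \<longrightarrow> \<chi> {i, j} < t) \<longrightarrow>
        (\<exists>f c. (\<forall>i j. i < j \<and> j < k \<longrightarrow> f i < f j) \<and> (\<forall>i<k. f i < N) \<and>
               (\<forall>e\<in>E. \<chi> (f ` e) = c)))"

definition ordered_ramsey :: "nat \<Rightarrow> nat \<Rightarrow> nat set set \<Rightarrow> nat" where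
  "ordered_ramsey t k E = (LEAST N. ordered_arrows N t k E)"

end

theory Submission
  imports Defs "HOL-Library.Ramsey"
begin

definition col :: "nat \<Rightarrow> nat \<Rightarrow> nat \<Rightarrow> nat" where
  "col t j k = (if j < t then (if j = t - 1 \<and> k = t then t - 2 else j)
               else if j = t then (if k = t then t - 1 else k - t - 1) else k - j)"

lemma col_pattern:
  assumes "t \<ge> 2" "i < j" "j \<le> k" "k < l" "l \<le> 2*t"
  shows "\<not> (col t i k = col t j k \<and> col t j k = col t j l)"
  using assms unfolding col_def by (auto split: if_splits)

lemma col_lt:
  assumes "t \<ge> 2" "j \<le> k" "k \<le> 2*t"
  shows "col t j k < t"
  using assms unfolding col_def by (auto split: if_splits)

lemma mono_gap:
  assumes "\<And>i j. i < j \<and> j < K \<Longrightarrow> (f::nat\<Rightarrow>nat) i < f j" "a \<le> b" "b < K"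
  shows "f a + (b - a) \<le> f b"
  using assms(2,3)
proof (induction b)
  case 0 then show ?case by simp
next
  case (Suc b)
  show ?case
  proof (cases "a = Suc b")
    case True then show ?thesis by simp
  next
    case False
    then have "a \<le> b" using Suc by simp
    then have "f a + (b - a) \<le> f b" using Suc by simp
    moreover have "f b < f (Suc b)" using assms(1) Suc by simp
    ultimately show ?thesis using \<open>a \<le> b\<close> by simp
  qed
qed

lemma div_gap:
  assumes "(r::nat) > 0" "x + r \<le> y" shows "x div r < y div r"
proof -
  have "(x + r) div r = x div r + 1" using assms(1) by simp
  moreover have "(x + r) div r \<le> y div r" using assms(2) by (rule div_le_mono)
  ultimately show ?thesis by simp
qed

lemma not_arrows:
  fixes t m n :: nat and E :: "nat set set"
  assumes "t \<ge> 2" "m \<ge> 1" "n \<ge> 1"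
    and "{0, m} \<in> E"
    and "{m - 1, m + n - 1} \<in> E"
    and "{m - 1, m} \<in> E"
    and "N \<le> (2 * t + 1) * (min m n - 1)"
  shows "\<not> ordered_arrows N t (m + n) E"
proof
  assume arr: "ordered_arrows N t (m + n) E"
  define r where "r = min m n - 1"
  show False
  proof (cases "r = 0")
    case True
    then have "N = 0" using assms(7) r_def by simp
    from arr have "\<exists>f c. (\<forall>i<m+n. f i < N)"
      unfolding ordered_arrows_def by (metis (no_types, lifting) less_nat_zero_code \<open>N = 0\<close>)
    then show False using \<open>N = 0\<close> assms(2) by auto
  next
    case False
    then have rpos: "r > 0" by simp
    define \<chi> where "\<chi> e = col t (Min e div r) (Max e div r)" for e :: "nat set"
    have chi2: "\<chi> {i, j} = col t (i div r) (j div r)" if "i < j" for i j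
      using that unfolding \<chi>_def by (simp add: min_def max_def)
    have "\<forall>i j. i < j \<and> j < N \<longrightarrow> \<chi> {i, j} < t"
    proof (intro allI impI)
      fix i j assume h: "i < j \<and> j < N"
      have "j < (2*t+1) * r" using h assms(7) r_def by simp
      then have "j div r < 2*t+1"
        by (metis div_less_iff_less_mult mult.commute rpos)
      moreover have "i div r \<le> j div r" using h by (simp add: div_le_mono)
      ultimately show "\<chi> {i, j} < t" using chi2 h col_lt assms(1) by simp
    qed
    with arr obtain f c where fm: "\<forall>i j. i < j \<and> j < m + n \<longrightarrow> f i < f j"
      and fN: "\<forall>i<m+n. f i < N" and fE: "\<forall>e\<in>E. \<chi> (f ` e) = c"
      unfolding ordered_arrows_def by blast
    have g1: "f 0 + (m - 1 - 0) \<le> f (m - 1)"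
      by (rule mono_gap[where K="m+n"]) (use fm assms in auto)
    have g2: "f m + (m + n - 1 - m) \<le> f (m + n - 1)"
      by (rule mono_gap[where K="m+n"]) (use fm assms in auto)
    have l1: "f 0 div r < f (m - 1) div r"
      by (rule div_gap[OF rpos]) (use g1 r_def in auto)
    have l3: "f m div r < f (m + n - 1) div r"
      by (rule div_gap[OF rpos]) (use g2 r_def in auto)
    have "f (m - 1) < f m" using fm assms by auto
    then have l2: "f (m - 1) div r \<le> f m div r" by (simp add: div_le_mono)
    have "f (m + n - 1) < N" using fN assms(2,3) by simp
    then have "f (m + n - 1) < (2*t+1) * r" using assms(7) unfolding r_def by linarith
    then have l4: "f (m + n - 1) div r \<le> 2 * t"
      by (metis div_less_iff_less_mult mult.commute rpos less_Suc_eq_le add.commute plus_1_eq_Suc)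
    have "f 0 < f m" using fm assms by auto
    have "f (m - 1) < f (m + n - 1)" using fm assms by auto
    have e1: "col t (f 0 div r) (f m div r) = c"
      using fE assms(4) chi2[OF \<open>f 0 < f m\<close>] by force
    have e2: "col t (f (m-1) div r) (f (m+n-1) div r) = c"
      using fE assms(5) chi2[OF \<open>f (m - 1) < f (m + n - 1)\<close>] by force
    have e3: "col t (f (m-1) div r) (f m div r) = c"
      using fE assms(6) chi2[OF \<open>f (m - 1) < f m\<close>] by force
    show False using col_pattern[OF assms(1) l1 l2 l3 l4] e1 e2 e3 by simp
  qed
qed

lemma arrows_exist:
  fixes E :: "nat set set"
  assumes "ordered_graph k E"
  shows "\<exists>N. ordered_arrows N t k E"
proof -
  obtain N :: nat where N: "partn_lst {..<N} (replicate t k) 2"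
    using ramsey_full[of "replicate t k" 2] by blast
  have "ordered_arrows N t k E"
    unfolding ordered_arrows_def
  proof (intro allI impI)
    fix \<chi> :: "nat set \<Rightarrow> nat"
    assume hc: "\<forall>i j. i < j \<and> j < N \<longrightarrow> \<chi> {i, j} < t"
    have "\<chi> \<in> nsets {..<N} 2 \<rightarrow> {..<t}"
    proof
      fix e assume "e \<in> nsets {..<N} 2"
      then obtain x y where "e = {x, y}" "x \<in> {..<N}" "y \<in> {..<N}" "x \<noteq> y"
        by (auto elim: nsets2_E)
      then show "\<chi> e \<in> {..<t}" using hc
      proof (cases "x < y")
        case False
        then have "y < x" using \<open>x \<noteq> y\<close> by simp
        then show ?thesis using hc \<open>e = {x, y}\<close> \<open>x \<in> {..<N}\<close>
          by (metis insert_commute lessThan_iff)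
      qed auto
    qed
    from partn_lstE[OF N this] obtain i H where i: "i < t"
      and H: "H \<in> nsets {..<N} k" and mono: "\<chi> ` (nsets H 2) \<subseteq> {i}"
      by auto
    have Hfin: "finite H" and Hc: "card H = k" and Hsub: "H \<subseteq> {..<N}"
      using H by (auto simp: nsets_def)
    define f where "f j = sorted_list_of_set H ! j" for j
    have len: "length (sorted_list_of_set H) = k" using Hc by simp
    have fmono: "\<forall>a b. a < b \<and> b < k \<longrightarrow> f a < f b"
      using len unfolding f_def
      by (metis strict_sorted_list_of_set sorted_wrt_nth_less)
    have fin: "\<And>a. a < k \<Longrightarrow> f a \<in> H"
      unfolding f_def using len Hfin by (metis nth_mem set_sorted_list_of_set)
    show "\<exists>f c. (\<forall>i j. i < j \<and> j < k \<longrightarrow> f i < f j) \<and> (\<forall>i<k. f i < N) \<and> (\<forall>e\<in>E. \<chi> (f ` e) = c)"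
    proof (intro exI conjI)
      show "\<forall>i j. i < j \<and> j < k \<longrightarrow> f i < f j" using fmono by blast
      show "\<forall>a<k. f a < N" using fin Hsub by auto
      show "\<forall>e\<in>E. \<chi> (f ` e) = i"
      proof
        fix e assume "e \<in> E"
        then obtain a b where ab: "a < b" "b < k" "e = {a, b}"
          using assms unfolding ordered_graph_def by blast
        have "f a < f b" using ab fmono by blast
        then have "f ` e \<in> nsets H 2"
          using ab fin by (auto simp: nsets_def card_insert_if)
        then show "\<chi> (f ` e) = i" using mono by auto
      qed
    qed
  qed
  then show ?thesis by blast
qed

theorem corollary5p1:
  fixes t m n :: nat and E :: "nat set set"
  assumes "t \<ge> 2"
    and "ordered_graph (m + n) E"
    and "two_ichromatic (m + n) E"
    and "interval_coloring (m + n) E {{0..<m}, {m..<m + n}}"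
    and "{0, m} \<in> E"
    and "{m - 1, m + n - 1} \<in> E"
    and "{m - 1, m} \<in> E"
  shows "ordered_ramsey t (m + n) E \<ge> (2 * t + 1) * (min m n - 1) + 1"
proof -
  have m1: "m \<ge> 1" and n1: "n \<ge> 1"
    using assms(4) unfolding interval_coloring_def by auto
  obtain N0 where N0: "ordered_arrows N0 t (m + n) E"
    using arrows_exist[OF assms(2)] by blast
  have L: "ordered_arrows (ordered_ramsey t (m + n) E) t (m + n) E"
    unfolding ordered_ramsey_def by (rule LeastI[where P="\<lambda>N. ordered_arrows N t (m + n) E", OF N0])
  show ?thesis
  proof (rule ccontr)
    assume "\<not> ?thesis"
    then have "ordered_ramsey t (m + n) E \<le> (2 * t + 1) * (min m n - 1)" by simp
    from not_arrows[OF assms(1) m1 n1 assms(5,6,7) this] L show False by simp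
  qed
qed

end
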